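(* Let $H$ be a separated labeled hypergraph whose 1-skeleton is connected and contains an odd cycle. Then $\mathcal A[H]=k[H]$ if and only if at least one of the following holds: (1) $H$ has an odd number of vertices; (2) $H$ has an edge of even dimension, i.e., an edge with an odd number of vertices.
   Context: Let $k$ be a field and $S=k[x_1,\dots,x_n,y]$. For an integral convex polytope $\mathcal P\subseteq\mathbb R^n_{\ge 0}$, the Ehrhart ring $\mathcal A[\mathcal P]$ is the $k$-subspace of $S$ spanned by the monomials $x^{\mathbf a}y^t$ with $t\in\mathbb N$, $\mathbf a\in t\mathcal P\cap\mathbb Z^n$; the polytopal ring is $k[\mathcal P]=k[x^{\mathbf a}y:\mathbf a\in\mathcal P\cap\mathbb Z^n]$. A labeled hypergraph $H=(V,f)$ on a finite set $V$ with alphabet $\{x_1,\dots,x_n\}$ is a function $f:\{x_1,\dots,x_n\}\to\mathcal P(V)$; its edges are the nonempty sets in the image of $f$. $H$ is separated if for all distinct $v,w\in V$ there are edges $F,G$ with $v\in F\setminus G$, $w\in G\setminus F$. For separated $H$, let $x^{\mathbf a_v}=\prod_{x:\,v\in f(x)}x$ for $v\in V$, $\mathcal P_H=\mathrm{conv}\{\mathbf a_v:v\in V\}$, $\mathcal A[H]=\mathcal A[\mathcal P_H]$, $k[H]=k[\mathcal P_H]$. The dimension of an edge $E$ is $|E|-1$. The 1-skeleton of $H$ is the simple graph on $V$ whose edges are the edges of $H$ having exactly two vertices. *)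

theory Defs
  imports "HOL-Analysis.Analysis" "HOL-Library.Poly_Mapping"
begin

(* Variables of S = k[x_1,...,x_n,y]: the alphabet is a finite type 'x (Some x = x_i),
  and None stands for y. *)

type_synonym 'x mono = "'x option \<Rightarrow>\<^sub>0 nat"
type_synonym ('x,'k) spoly = "'x mono \<Rightarrow>\<^sub>0 'k"

definition expo :: "('x::finite \<Rightarrow> nat) \<Rightarrow> nat \<Rightarrow> 'x mono" where
  "expo a t = (\<Sum>i\<in>UNIV. Poly_Mapping.single (Some i) (a i)) + Poly_Mapping.single None t"

definition monom_xy :: "('x::finite \<Rightarrow> nat) \<Rightarrow> nat \<Rightarrow> ('x,'k::field) spoly" where
  "monom_xy a t = Poly_Mapping.single (expo a t) 1"

definition kspan :: "('x,'k::field) spoly set \<Rightarrow> ('x,'k) spoly set" where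
  "kspan M = {p. \<exists>F c. finite F \<and> F \<subseteq> M \<and> p = (\<Sum>m\<in>F. Poly_Mapping.single 0 (c m) * m)}"

inductive_set kalg :: "('x,'k::field) spoly set \<Rightarrow> ('x,'k) spoly set" for G where
  const: "Poly_Mapping.single 0 c \<in> kalg G"
| gen: "g \<in> G \<Longrightarrow> g \<in> kalg G"
| add: "p \<in> kalg G \<Longrightarrow> q \<in> kalg G \<Longrightarrow> p + q \<in> kalg G"
| mult: "p \<in> kalg G \<Longrightarrow> q \<in> kalg G \<Longrightarrow> p * q \<in> kalg G"

definition rpt :: "('x::finite \<Rightarrow> nat) \<Rightarrow> real ^ 'x" where
  "rpt a = (\<chi> i. real (a i))"

(* Ehrhart ring A[P]: span of x^a y^t with a \<in> tP \<inter> Z^n (P \<subseteq> R^n_{\<ge>0}, so a \<in> N^n). *)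
definition ehrhart_ring :: "(real ^ 'x::finite) set \<Rightarrow> ('x,'k::field) spoly set" where
  "ehrhart_ring P = kspan {monom_xy a t | a t. rpt a \<in> (\<lambda>z. real t *\<^sub>R z) ` P}"

definition polytopal_ring :: "(real ^ 'x::finite) set \<Rightarrow> ('x,'k::field) spoly set" where
  "polytopal_ring P = kalg {monom_xy a 1 | a. rpt a \<in> P}"

(* Labeled hypergraph H = (V, f), f : alphabet \<Rightarrow> subsets of V. *)
definition hedges :: "('x \<Rightarrow> 'v set) \<Rightarrow> 'v set set" where
  "hedges f = {f x | x. f x \<noteq> {}}"

definition separated :: "'v set \<Rightarrow> ('x \<Rightarrow> 'v set) \<Rightarrow> bool" where
  "separated V f \<longleftrightarrow> (\<forall>v\<in>V. \<forall>w\<in>V. v \<noteq> w \<longrightarrow>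
      (\<exists>F\<in>hedges f. \<exists>G\<in>hedges f. v \<in> F - G \<and> w \<in> G - F))"

definition avec :: "('x::finite \<Rightarrow> 'v set) \<Rightarrow> 'v \<Rightarrow> real ^ 'x" where
  "avec f v = (\<chi> x. if v \<in> f x then 1 else 0)"

definition polytope_H :: "'v set \<Rightarrow> ('x::finite \<Rightarrow> 'v set) \<Rightarrow> (real ^ 'x) set" where
  "polytope_H V f = convex hull (avec f ` V)"

definition A_H :: "'v set \<Rightarrow> ('x::finite \<Rightarrow> 'v set) \<Rightarrow> ('x,'k::field) spoly set" where
  "A_H V f = ehrhart_ring (polytope_H V f)"

definition kH :: "'v set \<Rightarrow> ('x::finite \<Rightarrow> 'v set) \<Rightarrow> ('x,'k::field) spoly set" where
  "kH V f = polytopal_ring (polytope_H V f)"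

definition skel_adj :: "('x \<Rightarrow> 'v set) \<Rightarrow> 'v \<Rightarrow> 'v \<Rightarrow> bool" where
  "skel_adj f u w \<longleftrightarrow> u \<noteq> w \<and> {u, w} \<in> hedges f"

definition skel_connected :: "'v set \<Rightarrow> ('x \<Rightarrow> 'v set) \<Rightarrow> bool" where
  "skel_connected V f \<longleftrightarrow> V \<noteq> {} \<and>
     (\<forall>v\<in>V. \<forall>w\<in>V. (v, w) \<in> {(u, u'). skel_adj f u u'}\<^sup>*)"

definition skel_has_odd_cycle :: "('x \<Rightarrow> 'v set) \<Rightarrow> bool" where
  "skel_has_odd_cycle f \<longleftrightarrow> (\<exists>vs. distinct vs \<and> length vs \<ge> 3 \<and> odd (length vs) \<and>
     (\<forall>i<length vs. skel_adj f (vs ! i) (vs ! ((i + 1) mod length vs))))"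

end

theory Submission
  imports Defs
begin


lemma lookup_expo_Some: "Poly_Mapping.lookup (expo a t) (Some i) = a i"
  unfolding expo_def by (simp add: lookup_add lookup_sum lookup_single when_def)

lemma lookup_expo_None: "Poly_Mapping.lookup (expo a t) None = t"
  unfolding expo_def by (simp add: lookup_add lookup_sum lookup_single when_def)

lemma expo_inj: "expo a t = expo b s \<Longrightarrow> a = b \<and> t = s"
  by (metis ext lookup_expo_Some lookup_expo_None)

lemma expo_add: "expo a t + expo b s = expo (\<lambda>i. a i + b i) (t + s)"
  unfolding expo_def by (simp only: single_add sum.distrib add_ac)

lemma expo_zero: "expo (\<lambda>_. 0) 0 = 0"
  unfolding expo_def by simp

lemma monom_xy_mult: "(monom_xy a t * monom_xy b s :: ('x::finite,'k::field) spoly) = monom_xy (\<lambda>i. a i + b i) (t+s)"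
  unfolding monom_xy_def by (simp add: mult_single expo_add)

lemma pm_expand: "(p :: ('x,'k::field) spoly) = (\<Sum>m\<in>Poly_Mapping.keys p. Poly_Mapping.single 0 (Poly_Mapping.lookup p m) * Poly_Mapping.single m 1)"
proof (rule poly_mapping_eqI)
  fix k
  have "Poly_Mapping.lookup (\<Sum>m\<in>Poly_Mapping.keys p. Poly_Mapping.single 0 (Poly_Mapping.lookup p m) * Poly_Mapping.single m 1) k
     = (\<Sum>m\<in>Poly_Mapping.keys p. (Poly_Mapping.lookup p m when m = k))"
    by (simp add: lookup_sum mult_single lookup_single)
  also have "\<dots> = Poly_Mapping.lookup p k"
    by (cases "k \<in> Poly_Mapping.keys p") (auto simp: when_def in_keys_iff)
  finally show "Poly_Mapping.lookup p k = Poly_Mapping.lookup (\<Sum>m\<in>Poly_Mapping.keys p. Poly_Mapping.single 0 (Poly_Mapping.lookup p m) * Poly_Mapping.single m 1) k" by simp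
qed

lemma kspan_monoms: "kspan {Poly_Mapping.single m (1::'k::field) | m. m \<in> Z} = {p :: ('x,'k) spoly. Poly_Mapping.keys p \<subseteq> Z}"
proof (intro set_eqI iffI)
  fix p :: "('x,'k) spoly" assume "p \<in> kspan {Poly_Mapping.single m 1 | m. m \<in> Z}"
  then obtain F c where F: "finite F" "F \<subseteq> {Poly_Mapping.single m 1 | m. m \<in> Z}"
     and p: "p = (\<Sum>m\<in>F. Poly_Mapping.single 0 (c m) * m)" unfolding kspan_def by auto
  have "Poly_Mapping.keys p \<subseteq> (\<Union>m\<in>F. Poly_Mapping.keys (Poly_Mapping.single 0 (c m) * m))"
    unfolding p by (rule keys_sum)
  also have "\<dots> \<subseteq> Z"
  proof (rule UN_least)
    fix m assume "m \<in> F"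
    then obtain z where z: "z \<in> Z" "m = Poly_Mapping.single z 1" using F by auto
    show "Poly_Mapping.keys (Poly_Mapping.single 0 (c m) * m) \<subseteq> Z" using z by (simp add: mult_single)
  qed
  finally show "p \<in> {p. Poly_Mapping.keys p \<subseteq> Z}" by simp
next
  fix p :: "('x,'k) spoly" assume "p \<in> {p. Poly_Mapping.keys p \<subseteq> Z}"
  hence K: "Poly_Mapping.keys p \<subseteq> Z" by simp
  let ?F = "(\<lambda>m. Poly_Mapping.single m (1::'k)) ` Poly_Mapping.keys p"
  have inj: "inj_on (\<lambda>m. Poly_Mapping.single m (1::'k)) (Poly_Mapping.keys p)"
    by (rule inj_onI) (metis lookup_single_eq lookup_single_not_eq one_neq_zero)
  define c where "c = (\<lambda>q::('x,'k) spoly. Poly_Mapping.lookup p (SOME m. q = Poly_Mapping.single m 1))"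
  have cc: "c (Poly_Mapping.single m 1) = Poly_Mapping.lookup p m" for m
  proof -
    have "Poly_Mapping.single m (1::'k) = Poly_Mapping.single (SOME m'. Poly_Mapping.single m (1::'k) = Poly_Mapping.single m' 1) 1"
      by (rule someI) simp
    hence "(SOME m'. Poly_Mapping.single m (1::'k) = Poly_Mapping.single m' 1) = m"
      by (metis lookup_single_eq lookup_single_not_eq one_neq_zero)
    thus ?thesis unfolding c_def by simp
  qed
  have "p = (\<Sum>q\<in>?F. Poly_Mapping.single 0 (c q) * q)"
    apply (subst sum.reindex[OF inj])
    apply (simp add: cc)
    by (rule pm_expand)
  moreover have "?F \<subseteq> {Poly_Mapping.single m 1 | m. m \<in> Z}" using K by auto
  moreover have "finite ?F" by simp
  ultimately show "p \<in> kspan {Poly_Mapping.single m 1 | m. m \<in> Z}"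
    unfolding kspan_def mem_Collect_eq by (intro exI[of _ ?F] exI[of _ c]) simp
qed

lemma kalg_smult: "p \<in> kalg G \<Longrightarrow> Poly_Mapping.single 0 c * p \<in> kalg G"
  by (rule kalg.mult[OF kalg.const])

lemma kalg_sum: "finite F \<Longrightarrow> (\<And>m. m \<in> F \<Longrightarrow> g m \<in> kalg G) \<Longrightarrow> sum g F \<in> kalg G"
proof (induction F rule: finite_induct)
  case empty
  then show ?case using kalg.const[of 0 G] by simp
next
  case (insert x F)
  then show ?case by (simp add: kalg.add)
qed



definition ind :: "('x \<Rightarrow> 'v set) \<Rightarrow> 'v \<Rightarrow> 'x \<Rightarrow> nat" where
  "ind f v = (\<lambda>i. if v \<in> f i then 1 else 0)"

inductive_set MK :: "'v set \<Rightarrow> ('x \<Rightarrow> 'v set) \<Rightarrow> (('x \<Rightarrow> nat) \<times> nat) set" for V f where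
  zero: "((\<lambda>_. 0), 0) \<in> MK V f"
| step: "(a,t) \<in> MK V f \<Longrightarrow> v \<in> V \<Longrightarrow> ((\<lambda>i. a i + ind f v i), Suc t) \<in> MK V f"

definition MA :: "'v set \<Rightarrow> ('x::finite \<Rightarrow> 'v set) \<Rightarrow> (('x \<Rightarrow> nat) \<times> nat) set" where
  "MA V f = {(a,t). rpt a \<in> (\<lambda>z. real t *\<^sub>R z) ` polytope_H V f}"

lemma MK_add: "(b,s) \<in> MK V f \<Longrightarrow> (a,t) \<in> MK V f \<Longrightarrow> ((\<lambda>i. a i + b i), t + s) \<in> MK V f"
proof (induction rule: MK.induct)
  case zero
  then show ?case by simp
next
  case (step b s v)
  then have "((\<lambda>i. (a i + b i) + ind f v i), Suc (t + s)) \<in> MK V f" by (intro MK.step) auto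
  then show ?case by (simp add: add.assoc)
qed

lemma MK_rep: "(a,t) \<in> MK V f \<Longrightarrow> v \<in> V \<Longrightarrow> ((\<lambda>i. a i + n * ind f v i), t + n) \<in> MK V f"
proof (induction n)
  case 0
  then show ?case by simp
next
  case (Suc n)
  then have "((\<lambda>i. (a i + n * ind f v i) + ind f v i), Suc (t + n)) \<in> MK V f" by (intro MK.step) auto
  then show ?case by (simp add: algebra_simps)
qed

lemma mu_MK_aux:
  assumes "finite W" "W \<subseteq> V"
  shows "((\<lambda>i. \<Sum>v\<in>f i \<inter> W. \<mu> v), \<Sum>v\<in>W. \<mu> v) \<in> MK V f"
  using assms
proof (induction W rule: finite_induct)
  case empty
  then show ?case using MK.zero by simp
next
  case (insert x W)
  then have "((\<lambda>i. (\<Sum>v\<in>f i \<inter> W. \<mu> v) + \<mu> x * ind f x i), (\<Sum>v\<in>W. \<mu> v) + \<mu> x) \<in> MK V f"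
    by (intro MK_rep) auto
  moreover have "(\<Sum>v\<in>f i \<inter> insert x W. \<mu> v) = (\<Sum>v\<in>f i \<inter> W. \<mu> v) + \<mu> x * ind f x i" for i
  proof (cases "x \<in> f i")
    case True
    then have "f i \<inter> insert x W = insert x (f i \<inter> W)" by auto
    then show ?thesis using True insert by (simp add: ind_def)
  next
    case False
    then have "f i \<inter> insert x W = f i \<inter> W" by auto
    then show ?thesis using False by (simp add: ind_def)
  qed
  ultimately show ?case using insert by (simp add: add.commute)
qed

lemma mu_MK:
  assumes "finite V" "\<forall>x. f x \<subseteq> V"
  shows "((\<lambda>i. \<Sum>v\<in>f i. \<mu> v), \<Sum>v\<in>V. \<mu> v) \<in> MK V f"
proof -
  have "f i \<inter> V = f i" for i using assms by auto
  then show ?thesis using mu_MK_aux[OF assms(1) order_refl, where f=f and \<mu>=\<mu>] by simp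
qed

lemma MK_mu:
  assumes "finite V" "\<forall>x. f x \<subseteq> V"
  shows "(a,t) \<in> MK V f \<Longrightarrow> \<exists>\<mu>. (\<forall>i. a i = (\<Sum>v\<in>f i. \<mu> v)) \<and> t = (\<Sum>v\<in>V. \<mu> v)"
proof (induction rule: MK.induct)
  case zero
  then show ?case by (intro exI[of _ "\<lambda>_. 0"]) simp
next
  case (step a t v)
  then obtain \<mu> where mu: "\<forall>i. a i = (\<Sum>v\<in>f i. \<mu> v)" "t = (\<Sum>v\<in>V. \<mu> v)" by blast
  define \<mu>' where "\<mu>' = (\<lambda>w. \<mu> w + (if w = v then 1 else 0::nat))"
  have fin: "finite (f i)" for i using assms finite_subset by blast
  have "a i + ind f v i = (\<Sum>w\<in>f i. \<mu>' w)" for i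
    using mu fin[of i] by (simp add: \<mu>'_def sum.distrib ind_def)
  moreover have "Suc t = (\<Sum>w\<in>V. \<mu>' w)"
    using mu assms step by (simp add: \<mu>'_def sum.distrib)
  ultimately show ?case by blast
qed

lemma coord_sum:
  assumes "finite V" "f i \<subseteq> V"
  shows "(\<Sum>v\<in>V. (l v::real) * (if v \<in> f i then 1 else 0)) = (\<Sum>v\<in>f i. l v)"
proof -
  have "(\<Sum>v\<in>f i. l v) = (\<Sum>v\<in>V \<inter> f i. l v)" using assms by (simp add: Int_absorb1)
  also have "\<dots> = (\<Sum>v\<in>V. if v \<in> f i then l v else 0)" by (rule sum.inter_restrict[OF assms(1)])
  finally show ?thesis by (simp add: if_distrib cong: if_cong)
qed

lemma lam_MA:
  fixes f :: "'x::finite \<Rightarrow> 'v set"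
  assumes "finite V" "\<forall>x. f x \<subseteq> V" "V \<noteq> {}"
    and nn: "\<forall>v\<in>V. 0 \<le> l v" and st: "(\<Sum>v\<in>V. l v) = real t"
    and co: "\<forall>i. real (a i) = (\<Sum>v\<in>f i. l v)"
  shows "(a,t) \<in> MA V f"
proof (cases "t = 0")
  case True
  then have "\<forall>v\<in>V. l v = 0" using sum_nonneg_eq_0_iff[OF assms(1)] nn st by auto
  then have a0: "a i = 0" for i using co assms(2) by (metis (no_types, lifting) of_nat_eq_0_iff subsetD sum.neutral)
  obtain v0 where "v0 \<in> V" using assms by blast
  then have "avec f v0 \<in> polytope_H V f" unfolding polytope_H_def by (simp add: hull_inc)
  moreover have "rpt a = real t *\<^sub>R avec f v0" using True a0 by (simp add: rpt_def vec_eq_iff)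
  ultimately show ?thesis unfolding MA_def by auto
next
  case False
  define z where "z = (\<Sum>v\<in>V. (l v / real t) *\<^sub>R avec f v)"
  have "z \<in> polytope_H V f" unfolding z_def polytope_H_def
  proof (rule convex_sum[OF assms(1) convex_convex_hull])
    show "(\<Sum>i\<in>V. l i / real t) = 1" using False st by (simp add: sum_divide_distrib[symmetric])
    show "\<And>i. i \<in> V \<Longrightarrow> 0 \<le> l i / real t" using nn by simp
    show "\<And>i. i \<in> V \<Longrightarrow> avec f i \<in> convex hull avec f ` V" by (simp add: hull_inc)
  qed
  moreover have "rpt a = real t *\<^sub>R z"
  proof -
    have "(real t *\<^sub>R z) $ i = real (a i)" for i
    proof -
      have "(real t *\<^sub>R z) $ i = (\<Sum>v\<in>V. l v * (if v \<in> f i then 1 else 0))"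
        using False by (simp add: z_def avec_def sum_distrib_left)
      also have "\<dots> = real (a i)" using coord_sum[OF assms(1), of f i l] assms co by simp
      finally show ?thesis .
    qed
    then show ?thesis by (simp add: rpt_def vec_eq_iff)
  qed
  ultimately show ?thesis unfolding MA_def by auto
qed

lemma avec_inj:
  assumes "separated V f"
  shows "inj_on (avec f) V"
proof (rule inj_onI)
  fix v w assume vw: "v \<in> V" "w \<in> V" "avec f v = avec f w"
  show "v = w"
  proof (rule ccontr)
    assume "v \<noteq> w"
    then obtain F where "F \<in> hedges f" "v \<in> F" "w \<notin> F"
      using assms vw unfolding separated_def by blast
    then obtain x where "F = f x" unfolding hedges_def by auto
    then have "avec f v $ x \<noteq> avec f w $ x" using \<open>v \<in> F\<close> \<open>w \<notin> F\<close> by (simp add: avec_def)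
    then show False using vw by simp
  qed
qed

lemma MA_lam:
  fixes f :: "'x::finite \<Rightarrow> 'v set"
  assumes fin: "finite V" and sub: "\<forall>x. f x \<subseteq> V" and sep: "separated V f"
    and "(a,t) \<in> MA V f"
  shows "\<exists>l. (\<forall>v\<in>V. 0 \<le> l v) \<and> (\<Sum>v\<in>V. l v) = real t \<and> (\<forall>i. real (a i) = (\<Sum>v\<in>f i. l v))"
proof -
  obtain z where z: "z \<in> polytope_H V f" "rpt a = real t *\<^sub>R z" using assms(4) unfolding MA_def by auto
  have finS: "finite (avec f ` V)" using fin by simp
  obtain u where u: "\<forall>x\<in>avec f ` V. 0 \<le> u x" "sum u (avec f ` V) = 1"
      "(\<Sum>x\<in>avec f ` V. u x *\<^sub>R x) = z"
    using z(1) unfolding polytope_H_def convex_hull_finite[OF finS] by blast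
  have inj: "inj_on (avec f) V" by (rule avec_inj[OF sep])
  define l where "l = (\<lambda>v. real t * u (avec f v))"
  have u1: "(\<Sum>v\<in>V. u (avec f v)) = 1" using u(2) sum.reindex[OF inj, of u] by (simp add: comp_def)
  have "(\<Sum>v\<in>V. l v) = real t"
    using u1 by (simp add: l_def sum_distrib_left[symmetric])
  moreover have "\<forall>v\<in>V. 0 \<le> l v" using u(1) by (simp add: l_def)
  moreover have "real (a i) = (\<Sum>v\<in>f i. l v)" for i
  proof -
    have "real (a i) = (rpt a) $ i" by (simp add: rpt_def)
    also have "\<dots> = real t * (\<Sum>v\<in>V. u (avec f v) * (avec f v) $ i)"
    proof -
      have zV: "z = (\<Sum>v\<in>V. u (avec f v) *\<^sub>R avec f v)"
        using u(3) sum.reindex[OF inj, of "\<lambda>x. u x *\<^sub>R x"] by (simp add: comp_def)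
      show ?thesis using z(2) by (simp add: zV)
    qed
    also have "\<dots> = (\<Sum>v\<in>V. l v * (if v \<in> f i then 1 else 0))"
      by (simp add: l_def sum_distrib_left avec_def mult.assoc)
    also have "\<dots> = (\<Sum>v\<in>f i. l v)" using coord_sum[OF fin, of f i l] sub by blast
    finally show ?thesis .
  qed
  ultimately show ?thesis by blast
qed

lemma MK_MA:
  fixes f :: "'x::finite \<Rightarrow> 'v set"
  assumes "finite V" "\<forall>x. f x \<subseteq> V" "V \<noteq> {}" "(a,t) \<in> MK V f"
  shows "(a,t) \<in> MA V f"
proof -
  obtain \<mu> where mu: "\<forall>i. a i = (\<Sum>v\<in>f i. \<mu> v)" "t = (\<Sum>v\<in>V. \<mu> v)"
    using MK_mu[OF assms(1,2,4)] by blast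
  show ?thesis
    by (rule lam_MA[OF assms(1-3), of "\<lambda>v. real (\<mu> v)"]) (use mu in auto)
qed



lemma alt_sum: "(\<Sum>j<n. (-1::real)^j * (g j + g (Suc j))) = g 0 - (-1)^n * g n"
proof (induction n)
  case 0 then show ?case by simp
next
  case (Suc n)
  have "(\<Sum>j<Suc n. (-1::real)^j * (g j + g (Suc j))) = (g 0 - (-1)^n * g n) + (-1)^n * (g n + g (Suc n))"
    using Suc by simp
  also have "\<dots> = g 0 - (-1)^(Suc n) * g (Suc n)" by (simp add: algebra_simps)
  finally show ?case .
qed

lemma adj_edge: "skel_adj f u w \<Longrightarrow> \<exists>i. f i = {u,w}"
  unfolding skel_adj_def hedges_def by auto

lemma adj_V: "\<forall>x. f x \<subseteq> V \<Longrightarrow> skel_adj f u w \<Longrightarrow> u \<in> V \<and> w \<in> V"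
  using adj_edge by (metis insert_subset)

lemma cycle_lemma:
  fixes h :: "'v \<Rightarrow> real"
  assumes cyc: "skel_has_odd_cycle f"
    and H: "\<And>u w. skel_adj f u w \<Longrightarrow> h u + h w \<in> \<int>"
  shows "\<exists>c w. skel_adj f c w \<and> 2 * h c \<in> \<int>"
proof -
  obtain vs where vs: "distinct vs" "length vs \<ge> 3" "odd (length vs)"
    "\<forall>i<length vs. skel_adj f (vs ! i) (vs ! ((i + 1) mod length vs))"
    using cyc unfolding skel_has_odd_cycle_def by blast
  define n where "n = length vs"
  define g where "g = (\<lambda>j. h (vs ! (j mod n)))"
  have n0: "n > 0" using vs n_def by auto
  have "(\<Sum>j<n. (-1::real)^j * (g j + g (Suc j))) \<in> \<int>"
  proof (rule Ints_sum)
    fix j assume "j \<in> {..<n}"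
    then have j: "j < n" by simp
    have "g j + g (Suc j) = h (vs ! j) + h (vs ! ((j + 1) mod n))"
      using j by (simp add: g_def)
    also have "\<dots> \<in> \<int>" using H vs(4) j n_def by simp
    finally show "(-1::real)^j * (g j + g (Suc j)) \<in> \<int>"
      by (intro Ints_mult Ints_power) auto
  qed
  moreover have "(\<Sum>j<n. (-1::real)^j * (g j + g (Suc j))) = 2 * h (vs ! 0)"
  proof -
    have "(\<Sum>j<n. (-1::real)^j * (g j + g (Suc j))) = g 0 - (-1)^n * g n" by (rule alt_sum)
    moreover have "g n = g 0" by (simp add: g_def)
    moreover have "(-1::real)^n = -1" using vs(3) n_def by simp
    moreover have "g 0 = h (vs ! 0)" by (simp add: g_def)
    ultimately show ?thesis by simp
  qed
  ultimately have "2 * h (vs ! 0) \<in> \<int>" by simp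
  moreover have "skel_adj f (vs ! 0) (vs ! ((0 + 1) mod n))" using vs(4) n0 n_def by blast
  ultimately show ?thesis by blast
qed

lemma conn_lemma:
  fixes h :: "'v \<Rightarrow> real"
  assumes H: "\<And>u w. skel_adj f u w \<Longrightarrow> h u + h w \<in> \<int>"
    and c: "2 * h c \<in> \<int>"
    and "(c, v) \<in> {(u, u'). skel_adj f u u'}\<^sup>*"
  shows "h v - h c \<in> \<int>"
  using assms(3)
proof (induction rule: rtrancl_induct)
  case base
  then show ?case by simp
next
  case (step y z)
  then have "h y + h z \<in> \<int>" using H by simp
  then have "(h y + h z) - (h y - h c) - 2 * h c \<in> \<int>" using step c by (metis Ints_diff)
  then show ?case by (simp add: algebra_simps)
qed

lemma card_V_ge3:
  assumes "\<forall>x. f x \<subseteq> V" "finite V" "skel_has_odd_cycle f"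
  shows "card V \<ge> 3"
proof -
  obtain vs where vs: "distinct vs" "length vs \<ge> 3"
    "\<forall>i<length vs. skel_adj f (vs ! i) (vs ! ((i + 1) mod length vs))"
    using assms(3) unfolding skel_has_odd_cycle_def by blast
  have "set vs \<subseteq> V"
  proof
    fix x assume "x \<in> set vs"
    then obtain i where "i < length vs" "x = vs ! i" by (auto simp: in_set_conv_nth)
    then show "x \<in> V" using vs(3) adj_V[OF assms(1)] by blast
  qed
  then have "card (set vs) \<le> card V" using assms(2) by (simp add: card_mono)
  then show ?thesis using vs distinct_card by fastforce
qed

lemma core:
  fixes f :: "'x::finite \<Rightarrow> 'v set"
  assumes fin: "finite V" and sub: "\<forall>x. f x \<subseteq> V" and conn: "skel_connected V f"
    and cyc: "skel_has_odd_cycle f"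
    and nn: "\<forall>v\<in>V. 0 \<le> l v" and st: "(\<Sum>v\<in>V. l v) = real t"
    and co: "\<forall>i. real (a i) = (\<Sum>v\<in>f i. l v)"
  shows "(a,t) \<in> MK V f \<or> (\<forall>v\<in>V. \<exists>k::int. odd k \<and> 2 * l v = of_int k)"
proof -
  have H: "l u + l w \<in> \<int>" if uw: "skel_adj f u w" for u w
  proof -
    obtain i where i: "f i = {u,w}" using adj_edge[OF uw] by blast
    have "u \<noteq> w" using uw unfolding skel_adj_def by simp
    then have "real (a i) = l u + l w" using co i by simp
    then have e: "l u + l w = real (a i)" by simp
    show ?thesis unfolding e by (rule Ints_of_nat)
  qed
  obtain c w where cw: "skel_adj f c w" "2 * l c \<in> \<int>" using cycle_lemma[where h=l, OF cyc H] by blast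
  have cV: "c \<in> V" using adj_V[OF sub cw(1)] by simp
  have cls: "l v - l c \<in> \<int>" if vV: "v \<in> V" for v
  proof -
    have "(c, v) \<in> {(u, u'). skel_adj f u u'}\<^sup>*" using conn cV vV unfolding skel_connected_def by blast
    from conn_lemma[where h=l and f=f, OF H cw(2) this] show ?thesis .
  qed
  obtain k0 where k0: "2 * l c = of_int k0" using cw(2) by (auto elim: Ints_cases)
  show ?thesis
  proof (cases "even k0")
    case True
    then obtain m where "k0 = 2 * m" by blast
    then have "l c = of_int m" using k0 by simp
    then have lc: "l c \<in> \<int>" by simp
    have lint: "l v \<in> \<int>" if "v \<in> V" for v
    proof -
      have "(l v - l c) + l c \<in> \<int>" using cls[OF that] lc by (rule Ints_add)
      then show ?thesis by simp
    qed
    define \<mu> where "\<mu> = (\<lambda>v. nat \<lfloor>l v\<rfloor>)"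
    have mu: "real (\<mu> v) = l v" if vV: "v \<in> V" for v
    proof -
      obtain n where n: "l v = of_int n" using lint[OF vV] by (auto elim: Ints_cases)
      moreover have "0 \<le> l v" using nn vV by blast
      ultimately have "n \<ge> 0" by simp
      then show ?thesis using n unfolding \<mu>_def by simp
    qed
    have ai: "a i = (\<Sum>v\<in>f i. \<mu> v)" for i
    proof -
      have "real (a i) = (\<Sum>v\<in>f i. real (\<mu> v))" 
      proof -
        have "(\<Sum>v\<in>f i. l v) = (\<Sum>v\<in>f i. real (\<mu> v))"
        proof (rule sum.cong)
          fix x assume "x \<in> f i"
          then have "x \<in> V" using sub by blast
          then show "l x = real (\<mu> x)" using mu by simp
        qed simp
        then show ?thesis using co by simp
      qed
      then have "real (a i) = real (\<Sum>v\<in>f i. \<mu> v)" by simp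
      then show ?thesis by (simp only: of_nat_eq_iff)
    qed
    have tt: "t = (\<Sum>v\<in>V. \<mu> v)"
    proof -
      have "(\<Sum>v\<in>V. l v) = (\<Sum>v\<in>V. real (\<mu> v))"
        by (rule sum.cong) (simp_all add: mu)
      then have "real t = real (\<Sum>v\<in>V. \<mu> v)" using st by simp
      then show ?thesis by (simp only: of_nat_eq_iff)
    qed
    have "a = (\<lambda>i. \<Sum>v\<in>f i. \<mu> v)" using ai by auto
    then have "(a,t) \<in> MK V f" using mu_MK[OF fin sub, of \<mu>] tt by simp
    then show ?thesis by simp
  next
    case False
    have "\<exists>k::int. odd k \<and> 2 * l v = of_int k" if vV: "v \<in> V" for v
    proof -
      obtain m where m: "l v - l c = of_int m" using cls[OF vV] by (auto elim: Ints_cases)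
      have "2 * l v = of_int (2 * m + k0)" using m k0 by (simp add: algebra_simps)
      moreover have "odd (2 * m + k0)" using False by simp
      ultimately show ?thesis by blast
    qed
    then show ?thesis by simp
  qed
qed

lemma odd_sum_card:
  fixes l :: "'v \<Rightarrow> real"
  assumes "finite W" "\<forall>v\<in>W. \<exists>k::int. odd k \<and> 2 * l v = of_int k"
  shows "\<exists>K::int. 2 * (\<Sum>v\<in>W. l v) = of_int K \<and> (even K \<longleftrightarrow> even (card W))"
  using assms
proof (induction W rule: finite_induct)
  case empty
  then show ?case by (intro exI[of _ 0]) simp
next
  case (insert x W)
  then obtain K where K: "2 * (\<Sum>v\<in>W. l v) = of_int K" "even K \<longleftrightarrow> even (card W)" by auto
  obtain k where k: "odd k" "2 * l x = of_int k" using insert by auto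
  have "2 * (\<Sum>v\<in>insert x W. l v) = of_int (K + k)"
    using insert K k by (simp add: algebra_simps)
  moreover have "even (K + k) \<longleftrightarrow> even (card (insert x W))" using insert K k by auto
  ultimately show ?case by blast
qed

lemma odd_sum_even:
  fixes l :: "'v \<Rightarrow> real"
  assumes "finite W" "\<forall>v\<in>W. \<exists>k::int. odd k \<and> 2 * l v = of_int k" "(\<Sum>v\<in>W. l v) = real N"
  shows "even (card W)"
proof -
  obtain K where K: "2 * (\<Sum>v\<in>W. l v) = of_int K" "even K \<longleftrightarrow> even (card W)"
    using odd_sum_card[OF assms(1,2)] by blast
  then have "real_of_int K = real_of_int (2 * int N)" using assms(3) by simp
  then have "K = 2 * int N" by (simp only: of_int_eq_iff)
  then show ?thesis using K by simp
qed

lemma odd_sum_ge: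
  fixes l :: "'v \<Rightarrow> real"
  assumes "finite W" "\<forall>v\<in>W. \<exists>k::int. odd k \<and> 2 * l v = of_int k" "\<forall>v\<in>W. 0 \<le> l v"
  shows "real (card W) / 2 \<le> (\<Sum>v\<in>W. l v)"
proof -
  have "1/2 \<le> l v" if vW: "v \<in> W" for v
  proof -
    obtain k where k: "odd k" "2 * l v = of_int k" using assms(2) vW by blast
    have "0 \<le> l v" using assms(3) vW by blast
    then have "real_of_int k \<ge> 0" using k(2) by simp
    then have "k \<ge> 0" by simp
    then have "k \<ge> 1" using k(1) by (cases "k = 0") auto
    then show ?thesis using k(2) by linarith
  qed
  then have "(\<Sum>v\<in>W. (1/2::real)) \<le> (\<Sum>v\<in>W. l v)" by (rule sum_mono)
  then show ?thesis by simp
qed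



lemma conn_ne: "skel_connected V f \<Longrightarrow> V \<noteq> {}"
  unfolding skel_connected_def by simp

lemma MA_MK_1:
  fixes f :: "'x::finite \<Rightarrow> 'v set"
  assumes fin: "finite V" and sub: "\<forall>x. f x \<subseteq> V" and sep: "separated V f"
    and conn: "skel_connected V f" and cyc: "skel_has_odd_cycle f"
    and "(a, 1) \<in> MA V f"
  shows "(a, 1) \<in> MK V f"
proof -
  obtain l where l: "\<forall>v\<in>V. 0 \<le> l v" "(\<Sum>v\<in>V. l v) = real 1" "\<forall>i. real (a i) = (\<Sum>v\<in>f i. l v)"
    using MA_lam[OF fin sub sep assms(6)] by blast
  show ?thesis
  proof (rule ccontr)
    assume "(a,1) \<notin> MK V f"
    then have odd: "\<forall>v\<in>V. \<exists>k::int. odd k \<and> 2 * l v = of_int k"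
      using core[OF fin sub conn cyc l(1) l(2) l(3)] by blast
    have "real (card V) / 2 \<le> 1" using odd_sum_ge[OF fin odd l(1)] l(2) by simp
    moreover have "card V \<ge> 3" by (rule card_V_ge3[OF sub fin cyc])
    ultimately show False by simp
  qed
qed

lemma MA_MK_cond:
  fixes f :: "'x::finite \<Rightarrow> 'v set"
  assumes fin: "finite V" and sub: "\<forall>x. f x \<subseteq> V" and sep: "separated V f"
    and conn: "skel_connected V f" and cyc: "skel_has_odd_cycle f"
    and cond: "odd (card V) \<or> (\<exists>E\<in>hedges f. odd (card E))"
    and "(a, t) \<in> MA V f"
  shows "(a, t) \<in> MK V f"
proof -
  obtain l where l: "\<forall>v\<in>V. 0 \<le> l v" "(\<Sum>v\<in>V. l v) = real t" "\<forall>i. real (a i) = (\<Sum>v\<in>f i. l v)"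
    using MA_lam[OF fin sub sep assms(7)] by blast
  show ?thesis
  proof (rule ccontr)
    assume "(a,t) \<notin> MK V f"
    then have odd: "\<forall>v\<in>V. \<exists>k::int. odd k \<and> 2 * l v = of_int k"
      using core[OF fin sub conn cyc l(1) l(2) l(3)] by blast
    have "even (card V)" by (rule odd_sum_even[OF fin odd l(2)])
    moreover have "even (card E)" if EH: "E \<in> hedges f" for E
    proof -
      obtain i where i: "E = f i" using EH unfolding hedges_def by auto
      have "finite (f i)" using fin sub finite_subset by blast
      moreover have "\<forall>v\<in>f i. \<exists>k::int. odd k \<and> 2 * l v = of_int k" using odd sub by blast
      ultimately show ?thesis using odd_sum_even[of "f i" l "a i"] l(3) i by simp
    qed
    ultimately show False using cond by blast
  qed
qed

lemma witness:
  fixes f :: "'x::finite \<Rightarrow> 'v set"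
  assumes fin: "finite V" and sub: "\<forall>x. f x \<subseteq> V"
    and conn: "skel_connected V f" and cyc: "skel_has_odd_cycle f"
    and ncond: "\<not> (odd (card V) \<or> (\<exists>E\<in>hedges f. odd (card E)))"
  shows "\<exists>a t. (a, t) \<in> MA V f \<and> (a, t) \<notin> MK V f"
proof -
  have evV: "even (card V)" using ncond by simp
  have evE: "even (card (f i))" for i
  proof (cases "f i = {}")
    case True then show ?thesis by simp
  next
    case False then have "f i \<in> hedges f" unfolding hedges_def by auto
    then show ?thesis using ncond by blast
  qed
  define a where "a = (\<lambda>i. card (f i) div 2)"
  define t where "t = card V div 2"
  have "(a, t) \<in> MA V f"
  proof (rule lam_MA[OF fin sub conn_ne[OF conn], of "\<lambda>_. 1/2"])
    show "\<forall>v\<in>V. 0 \<le> (1/2::real)" by simp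
    show "(\<Sum>v\<in>V. (1/2::real)) = real t" using evV unfolding t_def by (auto elim!: evenE)
    show "\<forall>i. real (a i) = (\<Sum>v\<in>f i. (1/2::real))"
    proof
      fix i
      obtain m where "card (f i) = 2 * m" using evE[of i] by (auto elim: evenE)
      then show "real (a i) = (\<Sum>v\<in>f i. (1/2::real))" unfolding a_def by simp
    qed
  qed
  moreover have "(a, t) \<notin> MK V f"
  proof
    assume "(a, t) \<in> MK V f"
    then obtain \<mu> where mu: "\<forall>i. a i = (\<Sum>v\<in>f i. \<mu> v)" "t = (\<Sum>v\<in>V. \<mu> v)"
      using MK_mu[OF fin sub] by blast
    define h where "h = (\<lambda>v. real (\<mu> v) / 2 + 1/4)"
    have H: "h u + h w \<in> \<int>" if uw: "skel_adj f u w" for u w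
    proof -
      obtain i where i: "f i = {u,w}" using adj_edge[OF uw] by blast
      have "u \<noteq> w" using uw unfolding skel_adj_def by simp
      then have "a i = 1" using i unfolding a_def by simp
      then have "\<mu> u + \<mu> w = 1" using mu(1) i \<open>u \<noteq> w\<close> by simp
      then have "real (\<mu> u) + real (\<mu> w) = 1" by (metis of_nat_1 of_nat_add)
      then have "h u + h w = 1" unfolding h_def by (simp add: field_simps)
      then show ?thesis by simp
    qed
    obtain c w where "2 * h c \<in> \<int>" using cycle_lemma[where h=h, OF cyc H] by blast
    then obtain k where k: "2 * h c = of_int k" using Ints_cases by metis
    then have "real_of_int (2 * int (\<mu> c) + 1) = real_of_int (2 * k)" unfolding h_def by (simp add: algebra_simps)
    then have "2 * int (\<mu> c) + 1 = 2 * k" using of_int_eq_iff by blast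
    then show False by presburger
  qed
  ultimately show ?thesis by blast
qed

lemma A_H_eq:
  "(A_H V f :: ('x::finite,'k::field) spoly set) = {p. Poly_Mapping.keys p \<subseteq> (\<lambda>(a,t). expo a t) ` MA V f}"
proof -
  have "{monom_xy a t | a t. rpt a \<in> (\<lambda>z. real t *\<^sub>R z) ` polytope_H V f}
      = {Poly_Mapping.single m (1::'k) | m. m \<in> (\<lambda>(a,t). expo a t) ` MA V f}"
    unfolding monom_xy_def MA_def by auto
  then show ?thesis unfolding A_H_def ehrhart_ring_def by (simp add: kspan_monoms)
qed

lemma MK_kalg:
  fixes f :: "'x::finite \<Rightarrow> 'v set"
  shows "(a,t) \<in> MK V f \<Longrightarrow> (monom_xy a t :: ('x,'k::field) spoly) \<in> kalg {monom_xy a 1 | a. rpt a \<in> polytope_H V f}"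
proof (induction rule: MK.induct)
  case zero
  have "(monom_xy (\<lambda>_. 0) 0 :: ('x,'k) spoly) = Poly_Mapping.single 0 1"
    unfolding monom_xy_def by (simp only: expo_zero)
  then show ?case using kalg.const[of 1] by simp
next
  case (step a t v)
  have "rpt (ind f v) = avec f v" by (simp add: rpt_def avec_def ind_def vec_eq_iff)
  moreover have "avec f v \<in> polytope_H V f" using step(2) unfolding polytope_H_def by (rule hull_inc[OF imageI])
  ultimately have "rpt (ind f v) \<in> polytope_H V f" by simp
  then have "(monom_xy (ind f v) 1 :: ('x,'k) spoly) \<in> {monom_xy a 1 | a. rpt a \<in> polytope_H V f}"
    by blast
  then have g: "(monom_xy (ind f v) 1 :: ('x,'k) spoly) \<in> kalg {monom_xy a 1 | a. rpt a \<in> polytope_H V f}"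
    by (rule kalg.gen)
  have "(monom_xy a t * monom_xy (ind f v) 1 :: ('x,'k) spoly) \<in> kalg {monom_xy a 1 | a. rpt a \<in> polytope_H V f}"
    by (rule kalg.mult[OF step.IH g])
  moreover have "(monom_xy a t * monom_xy (ind f v) 1 :: ('x,'k) spoly) = monom_xy (\<lambda>i. a i + ind f v i) (Suc t)"
    by (simp add: monom_xy_mult)
  ultimately show ?case by simp
qed

lemma kH_eq:
  fixes f :: "'x::finite \<Rightarrow> 'v set"
  assumes fin: "finite V" and sub: "\<forall>x. f x \<subseteq> V" and sep: "separated V f"
    and conn: "skel_connected V f" and cyc: "skel_has_odd_cycle f"
  shows "(kH V f :: ('x,'k::field) spoly set) = {p. Poly_Mapping.keys p \<subseteq> (\<lambda>(a,t). expo a t) ` MK V f}"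
proof (intro set_eqI iffI)
  fix p :: "('x,'k) spoly"
  assume "p \<in> kH V f"
  then have "p \<in> kalg {monom_xy a 1 | a. rpt a \<in> polytope_H V f}" unfolding kH_def polytopal_ring_def .
  then show "p \<in> {p. Poly_Mapping.keys p \<subseteq> (\<lambda>(a,t). expo a t) ` MK V f}"
  proof (induction rule: kalg.induct)
    case (const c)
    have "((\<lambda>_. 0), 0) \<in> MK V f" by (rule MK.zero)
    then have "(0::'x mono) \<in> (\<lambda>(a,t). expo a t) ` MK V f" using expo_zero by force
    then show ?case by simp
  next
    case (gen g)
    then obtain a where a: "g = monom_xy a 1" "rpt a \<in> polytope_H V f" by auto
    then have "(a, 1) \<in> MA V f" unfolding MA_def by force
    then have "(a, 1) \<in> MK V f" by (rule MA_MK_1[OF fin sub sep conn cyc])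
    then show ?case using a unfolding monom_xy_def by force
  next
    case (add p q)
    then show ?case using keys_add[of p q] by blast
  next
    case (mult p q)
    have "Poly_Mapping.keys (p * q) \<subseteq> {x + y | x y. x \<in> Poly_Mapping.keys p \<and> y \<in> Poly_Mapping.keys q}"
      by (rule keys_mult)
    also have "\<dots> \<subseteq> (\<lambda>(a,t). expo a t) ` MK V f"
    proof clarify
      fix x y
      assume xy: "x \<in> Poly_Mapping.keys p" "y \<in> Poly_Mapping.keys q"
      have "x \<in> (\<lambda>(a,t). expo a t) ` MK V f" "y \<in> (\<lambda>(a,t). expo a t) ` MK V f"
        using mult xy by blast+
      then obtain a t b s where "(a,t) \<in> MK V f" "(b,s) \<in> MK V f" "x = expo a t" "y = expo b s"
        by auto
      then show "x + y \<in> (\<lambda>(a,t). expo a t) ` MK V f"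
        using MK_add[of b s V f a t] by (force simp: expo_add)
    qed
    finally show ?case by simp
  qed
next
  fix p :: "('x,'k) spoly"
  assume "p \<in> {p. Poly_Mapping.keys p \<subseteq> (\<lambda>(a,t). expo a t) ` MK V f}"
  then have K: "Poly_Mapping.keys p \<subseteq> (\<lambda>(a,t). expo a t) ` MK V f" by simp
  have "(\<Sum>m\<in>Poly_Mapping.keys p. Poly_Mapping.single 0 (Poly_Mapping.lookup p m) * Poly_Mapping.single m 1)
      \<in> kalg {monom_xy a 1 | a. rpt a \<in> polytope_H V f}"
  proof (rule kalg_sum)
    show "finite (Poly_Mapping.keys p)" by simp
    fix m assume "m \<in> Poly_Mapping.keys p"
    then obtain a t where at: "(a,t) \<in> MK V f" "m = expo a t" using K by auto
    have "(Poly_Mapping.single m 1 :: ('x,'k) spoly) \<in> kalg {monom_xy a 1 | a. rpt a \<in> polytope_H V f}"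
      using MK_kalg[OF at(1)] at(2) unfolding monom_xy_def by simp
    then show "Poly_Mapping.single 0 (Poly_Mapping.lookup p m) * Poly_Mapping.single m 1
        \<in> kalg {monom_xy a 1 | a. rpt a \<in> polytope_H V f}" by (rule kalg_smult)
  qed
  then show "p \<in> kH V f" unfolding kH_def polytopal_ring_def using pm_expand[of p] by simp
qed

theorem theorem4p1:
  fixes V :: "'v set" and f :: "'x::finite \<Rightarrow> 'v set"
  assumes "finite V"
    and "\<forall>x. f x \<subseteq> V"
    and "separated V f"
    and "skel_connected V f"
    and "skel_has_odd_cycle f"
  shows "(A_H V f = (kH V f :: ('x, 'k::field) spoly set)) \<longleftrightarrow>
           (odd (card V) \<or> (\<exists>E\<in>hedges f. odd (card E)))"
proof
  assume eq: "A_H V f = (kH V f :: ('x, 'k::field) spoly set)"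
  show "odd (card V) \<or> (\<exists>E\<in>hedges f. odd (card E))"
  proof (rule ccontr)
    assume nc: "\<not> (odd (card V) \<or> (\<exists>E\<in>hedges f. odd (card E)))"
    obtain a t where at: "(a, t) \<in> MA V f" "(a, t) \<notin> MK V f"
      using witness[OF assms(1,2,4,5) nc] by blast
    have "(Poly_Mapping.single (expo a t) 1 :: ('x,'k) spoly) \<in> A_H V f"
      using at(1) by (simp add: A_H_eq) force
    then have "(Poly_Mapping.single (expo a t) 1 :: ('x,'k) spoly) \<in> kH V f" using eq by simp
    then have "(Poly_Mapping.single (expo a t) 1 :: ('x,'k) spoly) \<in> {p. Poly_Mapping.keys p \<subseteq> (\<lambda>(a,t). expo a t) ` MK V f}"
      using kH_eq[OF assms] by blast
    then have "expo a t \<in> (\<lambda>(a,t). expo a t) ` MK V f" by simp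
    then obtain b s where "(b,s) \<in> MK V f" "expo b s = expo a t" by auto
    then show False using at(2) expo_inj[of b s a t] by simp
  qed
next
  assume cond: "odd (card V) \<or> (\<exists>E\<in>hedges f. odd (card E))"
  have "MA V f = MK V f"
  proof
    show "MA V f \<subseteq> MK V f" using MA_MK_cond[OF assms cond] by auto
    show "MK V f \<subseteq> MA V f" using MK_MA[OF assms(1,2) conn_ne[OF assms(4)]] by auto
  qed
  then show "A_H V f = (kH V f :: ('x, 'k::field) spoly set)"
    by (simp add: A_H_eq kH_eq[OF assms])
qed


end
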